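(* Let $n$ be a positive integer and $\lambda$ an infinite cardinal. For every $d$-feebly compact shift-continuous $T_1$-topology $\tau$ on the semilattice $\exp_n\lambda$, the subset $\exp_n\lambda\setminus\exp_{n-1}\lambda$ is dense in $(\exp_n\lambda,\tau)$.
   Context: For a positive integer $n$ and a cardinal $\lambda$, $\exp_n\lambda=\{A\subseteq\lambda\colon |A|\leqslant n\}$, regarded as a semilattice under the operation $\cap$ (so $\exp_0\lambda=\{\varnothing\}$). A topology $\tau$ on a semilattice $S$ is shift-continuous if the semilattice operation $S\times S\to S$ is separately continuous, i.e. $(S,\tau)$ is a semitopological semilattice. A topological space is $d$-feebly compact if every discrete family of open subsets of it is finite. *)

theory Defs
  imports "HOL-Analysis.Analysis"
begin

definition exp_set :: "nat \<Rightarrow> 'a set \<Rightarrow> 'a set set" where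
  "exp_set n L = {A. A \<subseteq> L \<and> finite A \<and> card A \<le> n}"

definition shift_continuous :: "'a set topology \<Rightarrow> bool" where
  "shift_continuous X \<longleftrightarrow>
     (\<forall>a\<in>topspace X. continuous_map X X (\<lambda>x. a \<inter> x) \<and> continuous_map X X (\<lambda>x. x \<inter> a))"

definition discrete_family :: "'a topology \<Rightarrow> 'a set set \<Rightarrow> bool" where
  "discrete_family X F \<longleftrightarrow>
     (\<forall>x\<in>topspace X. \<exists>V. openin X V \<and> x \<in> V \<and>
        (\<forall>U\<in>F. \<forall>W\<in>F. U \<inter> V \<noteq> {} \<and> W \<inter> V \<noteq> {} \<longrightarrow> U = W))"

definition d_feebly_compact :: "'a topology \<Rightarrow> bool" where
  "d_feebly_compact X \<longleftrightarrow>
     (\<forall>F. (\<forall>U\<in>F. openin X U) \<and> discrete_family X F \<longrightarrow> finite F)"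

end

theory Submission
  imports Defs
begin

lemma up_nbhd:
  assumes top: "topspace X = exp_set n L" and t1: "t1_space X"
    and sc: "shift_continuous X" and a: "a \<in> topspace X"
  shows "\<exists>V. openin X V \<and> a \<in> V \<and> (\<forall>y\<in>V. a \<subseteq> y)"
proof -
  have fa: "finite a" using a top by (auto simp: exp_set_def)
  define D where "D = {y \<in> topspace X. y \<subseteq> a} - {a}"
  have "finite D" unfolding D_def using fa by (auto intro: finite_subset[of _ "Pow a"])
  hence cD: "closedin X D" using t1 unfolding t1_space_closedin_finite D_def by auto
  define W where "W = topspace X - D"
  have oW: "openin X W" unfolding W_def using cD by auto
  have cm: "continuous_map X X (\<lambda>x. x \<inter> a)" using sc a unfolding shift_continuous_def by auto
  define V where "V = {y \<in> topspace X. y \<inter> a \<in> W}"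
  have "openin X V" unfolding V_def using openin_continuous_map_preimage[OF cm oW] by simp
  moreover have "a \<in> V" unfolding V_def W_def D_def using a by auto
  moreover have "\<forall>y\<in>V. a \<subseteq> y" unfolding V_def W_def D_def by auto
  ultimately show ?thesis by blast
qed

lemma no_isolated:
  assumes top: "topspace X = exp_set n L" and t1: "t1_space X"
    and sc: "shift_continuous X" and dfc: "d_feebly_compact X" and inf: "infinite L"
    and x: "x \<in> topspace X" and cx: "card x < n" and ox: "openin X {x}"
  shows False
proof -
  have xL: "x \<subseteq> L" and fx: "finite x" using x top by (auto simp: exp_set_def)
  have "infinite (L - x)" using inf fx by auto
  then obtain f :: "nat \<Rightarrow> 'a" where finj: "inj f" and fr: "range f \<subseteq> L - x"
    using infinite_countable_subset by blast
  define m where "m = n - card x"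
  have m1: "m \<ge> 1" using cx unfolding m_def by auto
  define B where "B i = f ` {i*m..<Suc i * m}" for i
  define M where "M i = x \<union> B i" for i
  have cB: "card (B i) = m" for i
    unfolding B_def using finj by (simp add: card_image inj_on_subset)
  have Bx: "B i \<inter> x = {}" for i unfolding B_def using fr by auto
  have BL: "B i \<subseteq> L" for i unfolding B_def using fr by auto
  have fB: "finite (B i)" for i unfolding B_def by auto
  have Bdisj: "B i \<inter> B j = {}" if "i \<noteq> j" for i j
  proof -
    have "{i*m..<Suc i * m} \<inter> {j*m..<Suc j * m} = {}"
    proof (cases "i < j")
      case True
      hence "Suc i * m \<le> j * m" by (metis Suc_leI mult_le_mono1)
      thus ?thesis by auto
    next
      case False
      hence "Suc j * m \<le> i * m" using that by (metis Suc_leI linorder_neqE_nat mult_le_mono1)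
      thus ?thesis by auto
    qed
    thus ?thesis unfolding B_def using finj by (simp add: image_Int[symmetric])
  qed
  have Bne: "B i \<noteq> {}" for i using cB m1 by (metis card.empty not_one_le_zero)
  have cM: "card (M i) = n" for i
    unfolding M_def using card_Un_disjoint[OF fx fB, of i] Bx cB cx m_def
    by (simp add: Int_commute)
  have MS: "M i \<in> topspace X" for i
    unfolding top exp_set_def M_def using xL BL fx fB cM M_def by auto
  have MB: "M i - x = B i" for i unfolding M_def using Bx by auto
  have Minj: "inj M"
  proof
    fix i j assume "M i = M j"
    hence "B i = B j" using MB by metis
    thus "i = j" using Bdisj Bne by (metis Int_absorb)
  qed
  define F where "F = range (\<lambda>i. {M i})"
  have "infinite F"
  proof
    assume "finite F"
    moreover have "inj (\<lambda>i. {M i})" using Minj by (simp add: inj_def)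
    ultimately show False unfolding F_def using finite_imageD by blast
  qed
  moreover have "\<forall>U\<in>F. openin X U"
  proof
    fix U assume "U \<in> F"
    then obtain i where U: "U = {M i}" unfolding F_def by auto
    obtain V where V: "openin X V" "M i \<in> V" "\<forall>y\<in>V. M i \<subseteq> y"
      using up_nbhd[OF top t1 sc MS] by blast
    have "V = {M i}"
    proof (intro equalityI subsetI)
      fix y assume y: "y \<in> V"
      hence "y \<in> topspace X" using V(1) openin_subset by blast
      hence "finite y" "card y \<le> n" using top by (auto simp: exp_set_def)
      moreover have "M i \<subseteq> y" using V y by auto
      ultimately show "y \<in> {M i}" using cM card_subset_eq by (metis card_mono le_antisym singleton_iff)
    qed (use V in auto)
    thus "openin X U" using U V by simp
  qed
  moreover have "discrete_family X F"
    unfolding discrete_family_def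
  proof
    fix p assume p: "p \<in> topspace X"
    show "\<exists>V. openin X V \<and> p \<in> V \<and> (\<forall>U\<in>F. \<forall>W\<in>F. U \<inter> V \<noteq> {} \<and> W \<inter> V \<noteq> {} \<longrightarrow> U = W)"
    proof (cases "x \<subseteq> p")
      case True
      show ?thesis
      proof (cases "p = x")
        case True
        have "\<forall>U\<in>F. U \<inter> {x} = {}"
          unfolding F_def using cM cx by auto
        thus ?thesis using ox True by blast
      next
        case False
        obtain V where V: "openin X V" "p \<in> V" "\<forall>y\<in>V. p \<subseteq> y"
          using up_nbhd[OF top t1 sc p] by blast
        obtain c where c: "c \<in> p" "c \<notin> x" using False \<open>x \<subseteq> p\<close> by blast
        have "\<forall>U\<in>F. \<forall>W\<in>F. U \<inter> V \<noteq> {} \<and> W \<inter> V \<noteq> {} \<longrightarrow> U = W"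
        proof (intro ballI impI)
          fix U W assume "U \<in> F" "W \<in> F" and h: "U \<inter> V \<noteq> {} \<and> W \<inter> V \<noteq> {}"
          then obtain i j where U: "U = {M i}" and W: "W = {M j}" unfolding F_def by auto
          have "M i \<in> V" "M j \<in> V" using h U W by auto
          hence "c \<in> M i" "c \<in> M j" using V c by auto
          hence "c \<in> B i" "c \<in> B j" using MB c by auto
          hence "i = j" using Bdisj by blast
          thus "U = W" using U W by simp
        qed
        thus ?thesis using V by blast
      qed
    next
      case False
      have cm: "continuous_map X X (\<lambda>y. y \<inter> x)" using sc x unfolding shift_continuous_def by auto
      have "closedin X {x}" using t1 x unfolding t1_space_closedin_finite by auto
      hence cC: "closedin X {y \<in> topspace X. y \<inter> x \<in> {x}}"
        using closedin_continuous_map_preimage[OF cm] by blast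
      define V where "V = topspace X - {y \<in> topspace X. y \<inter> x \<in> {x}}"
      have oV: "openin X V" unfolding V_def using cC by auto
      have pV: "p \<in> V" unfolding V_def using p False by auto
      have "\<forall>U\<in>F. U \<inter> V = {}" unfolding F_def V_def M_def using MS M_def by auto
      thus ?thesis using oV pV by blast
    qed
  qed
  ultimately show False using dfc unfolding d_feebly_compact_def by blast
qed

theorem proposition2:
  fixes n :: nat and L :: "'a set" and X :: "'a set topology"
  assumes "n \<ge> 1"
    and "infinite L"
    and "topspace X = exp_set n L"
    and "t1_space X"
    and "shift_continuous X"
    and "d_feebly_compact X"
  shows "X closure_of (exp_set n L - exp_set (n - 1) L) = topspace X"
proof (intro equalityI)
  show "X closure_of (exp_set n L - exp_set (n - 1) L) \<subseteq> topspace X"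
    by (rule closure_of_subset_topspace)
  show "topspace X \<subseteq> X closure_of (exp_set n L - exp_set (n - 1) L)"
  proof
    fix x assume x: "x \<in> topspace X"
    show "x \<in> X closure_of (exp_set n L - exp_set (n - 1) L)"
      unfolding in_closure_of
    proof (intro conjI allI impI x)
      fix T assume T: "x \<in> T \<and> openin X T"
      have TS: "T \<subseteq> topspace X" using T openin_subset by blast
      define K where "K = card ` T"
      have Kb: "K \<subseteq> {..n}" unfolding K_def using TS assms(3) by (auto simp: exp_set_def)
      hence fK: "finite K" using finite_subset by blast
      have "K \<noteq> {}" unfolding K_def using T by auto
      hence "Max K \<in> K" using fK by simp
      then obtain z where z: "z \<in> T" "card z = Max K" unfolding K_def by auto
      have zmax: "card y \<le> card z" if "y \<in> T" for y
        using z fK that unfolding K_def by simp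
      have zS: "z \<in> topspace X" using z TS by auto
      hence zL: "z \<subseteq> L" "finite z" "card z \<le> n" using assms(3) by (auto simp: exp_set_def)
      show "\<exists>y. y \<in> exp_set n L - exp_set (n - 1) L \<and> y \<in> T"
      proof (cases "card z = n")
        case True
        hence "z \<in> exp_set n L - exp_set (n - 1) L"
          using zL assms(1) by (auto simp: exp_set_def)
        thus ?thesis using z by blast
      next
        case False
        obtain V where V: "openin X V" "z \<in> V" "\<forall>y\<in>V. z \<subseteq> y"
          using up_nbhd[OF assms(3) assms(4) assms(5) zS] by blast
        have "T \<inter> V = {z}"
        proof (intro equalityI subsetI)
          fix y assume y: "y \<in> T \<inter> V"
          hence "y \<in> topspace X" using TS by auto
          hence "finite y" using assms(3) by (auto simp: exp_set_def)
          moreover have "z \<subseteq> y" using V y by auto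
          moreover have "card y \<le> card z" using zmax y by auto
          ultimately show "y \<in> {z}" using card_subset_eq by (metis card_mono le_antisym singleton_iff)
        qed (use V z in auto)
        hence "openin X {z}" using T V by (metis openin_Int)
        moreover have "card z < n" using False zL by auto
        ultimately show ?thesis
          using no_isolated[OF assms(3) assms(4) assms(5) assms(6) assms(2) zS] by blast
      qed
    qed
  qed
qed

end
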